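(* Let $(S,d)$ be a metric space, let $P$ be a non-empty subset of $S$ with the induced metric, and let $f,g\in\mathrm{BL}(P)$. Then: (i) $\mathcal{E}^{S,0}_P(f)\le\|f\|_\infty\mathbf{1}$; (ii) $\mathcal{E}^{S,0}_P(c\mathbf{1})=c\mathbf{1}$ for every $c\in\mathbb{R}$; (iii) if $f\le g$ and $|f|_L\ge|g|_L$, then $\mathcal{E}^{S,0}_P(f)\le\mathcal{E}^{S,0}_P(g)$; (iv) if $|f\vee g|_L\ge|f|_L$ and $|f\vee g|_L\ge|g|_L$, then $\mathcal{E}^{S,0}_P(f\vee g)\le\mathcal{E}^{S,0}_P(f)\vee\mathcal{E}^{S,0}_P(g)$.
   Context: $\mathrm{BL}(P)$ is the space of bounded real-valued Lipschitz functions on $P$, $|f|_L=\sup_{x\neq y}|f(x)-f(y)|/d(x,y)$ (with $|f|_L=0$ if $P$ is a singleton), $f\vee g$ is the pointwise maximum, and $\mathbf{1}$ is the constant function $1$. For $f\in\mathrm{BL}(P)$, $\mathcal{E}^{S,0}_P f(x)=\sup_{p\in P}[f(p)-|f|_L d(p,x)]$ for $x\in S$. *)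

theory Defs
  imports "HOL-Analysis.Analysis"
begin

text \<open>Functions on P are represented as total functions; only values on P matter.
  The ambient metric space S is the type 'a (class metric_space).\<close>

definition BL :: "'a::metric_space set \<Rightarrow> ('a \<Rightarrow> real) set" where
  "BL P = {f. (\<exists>B. \<forall>x\<in>P. \<bar>f x\<bar> \<le> B) \<and> (\<exists>K. \<forall>x\<in>P. \<forall>y\<in>P. \<bar>f x - f y\<bar> \<le> K * dist x y)}"

definition lip_seminorm :: "'a::metric_space set \<Rightarrow> ('a \<Rightarrow> real) \<Rightarrow> real" where
  "lip_seminorm P f =
     (if \<exists>x\<in>P. \<exists>y\<in>P. x \<noteq> y
      then (SUP xy \<in> {(x,y). x \<in> P \<and> y \<in> P \<and> x \<noteq> y}. \<bar>f (fst xy) - f (snd xy)\<bar> / dist (fst xy) (snd xy))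
      else 0)"

definition sup_norm :: "'a set \<Rightarrow> ('a \<Rightarrow> real) \<Rightarrow> real" where
  "sup_norm P f = (SUP x\<in>P. \<bar>f x\<bar>)"

definition ext0 :: "'a::metric_space set \<Rightarrow> ('a \<Rightarrow> real) \<Rightarrow> 'a \<Rightarrow> real" where
  "ext0 P f x = (SUP p\<in>P. f p - lip_seminorm P f * dist p x)"

end

theory Submission
  imports Defs
begin

lemma lip_nonneg:
  assumes "f \<in> BL P"
  shows "0 \<le> lip_seminorm P f"
proof (cases "\<exists>x\<in>P. \<exists>y\<in>P. x \<noteq> y")
  case True
  then obtain x y where xy: "x \<in> P" "y \<in> P" "x \<noteq> y" by blast
  from assms obtain K where K: "\<forall>x\<in>P. \<forall>y\<in>P. \<bar>f x - f y\<bar> \<le> K * dist x y"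
    unfolding BL_def by blast
  let ?S = "{(x,y). x \<in> P \<and> y \<in> P \<and> x \<noteq> y}"
  let ?r = "\<lambda>xy. \<bar>f (fst xy) - f (snd xy)\<bar> / dist (fst xy) (snd xy)"
  have bdd: "bdd_above (?r ` ?S)"
  proof (rule bdd_aboveI2)
    fix xy assume "xy \<in> ?S"
    then obtain a b where ab: "xy = (a,b)" "a \<in> P" "b \<in> P" "a \<noteq> b" by auto
    have "dist a b > 0" using ab by simp
    moreover have "\<bar>f a - f b\<bar> \<le> K * dist a b" using K ab by blast
    ultimately show "?r xy \<le> K" using ab by (simp add: divide_le_eq)
  qed
  have "0 \<le> ?r (x,y)" by simp
  also have "\<dots> \<le> (SUP xy \<in> ?S. ?r xy)"
    by (rule cSUP_upper[OF _ bdd]) (use xy in auto)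
  finally show ?thesis using True unfolding lip_seminorm_def by simp
next
  case False
  then show ?thesis unfolding lip_seminorm_def by simp
qed

lemma lip_const: "lip_seminorm P (\<lambda>_. c) = 0"
  unfolding lip_seminorm_def
  by (auto intro!: cSUP_const)

lemma ext_bdd:
  assumes "f \<in> BL P"
  shows "bdd_above ((\<lambda>p. f p - lip_seminorm P f * dist p x) ` P)"
proof -
  from assms obtain B where B: "\<forall>x\<in>P. \<bar>f x\<bar> \<le> B" unfolding BL_def by blast
  have L: "0 \<le> lip_seminorm P f" by (rule lip_nonneg[OF assms])
  show ?thesis
  proof (rule bdd_aboveI2)
    fix p assume "p \<in> P"
    have "lip_seminorm P f * dist p x \<ge> 0" using L by simp
    then show "f p - lip_seminorm P f * dist p x \<le> B" using B \<open>p \<in> P\<close> by force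
  qed
qed

theorem proposition4p3:
  fixes P :: "'a::metric_space set" and f g :: "'a \<Rightarrow> real"
  assumes "P \<noteq> {}" and "f \<in> BL P" and "g \<in> BL P"
  shows "(\<forall>x. ext0 P f x \<le> sup_norm P f)
    \<and> (\<forall>c::real. \<forall>x. ext0 P (\<lambda>_. c) x = c)
    \<and> ((\<forall>p\<in>P. f p \<le> g p) \<and> lip_seminorm P f \<ge> lip_seminorm P g
           \<longrightarrow> (\<forall>x. ext0 P f x \<le> ext0 P g x))
    \<and> (lip_seminorm P (\<lambda>p. max (f p) (g p)) \<ge> lip_seminorm P f
         \<and> lip_seminorm P (\<lambda>p. max (f p) (g p)) \<ge> lip_seminorm P g
           \<longrightarrow> (\<forall>x. ext0 P (\<lambda>p. max (f p) (g p)) x \<le> max (ext0 P f x) (ext0 P g x)))"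
proof (intro conjI allI impI)
  have Lf: "0 \<le> lip_seminorm P f" by (rule lip_nonneg[OF assms(2)])
  have Lg: "0 \<le> lip_seminorm P g" by (rule lip_nonneg[OF assms(3)])
  fix x
  show "ext0 P f x \<le> sup_norm P f"
    unfolding ext0_def
  proof (rule cSUP_least[OF assms(1)])
    fix p assume p: "p \<in> P"
    from assms(2) obtain B where B: "\<forall>x\<in>P. \<bar>f x\<bar> \<le> B" unfolding BL_def by blast
    have bdd: "bdd_above ((\<lambda>x. \<bar>f x\<bar>) ` P)" using B by (auto intro: bdd_aboveI2)
    have "f p - lip_seminorm P f * dist p x \<le> \<bar>f p\<bar>" using Lf by (simp add: abs_ge_self add_increasing2 diff_le_eq)
    also have "\<dots> \<le> sup_norm P f" unfolding sup_norm_def by (rule cSUP_upper[OF p bdd])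
    finally show "f p - lip_seminorm P f * dist p x \<le> sup_norm P f" .
  qed
next
  fix c :: real and x
  show "ext0 P (\<lambda>_. c) x = c" unfolding ext0_def lip_const using assms(1) by simp
next
  fix x
  assume h: "(\<forall>p\<in>P. f p \<le> g p) \<and> lip_seminorm P g \<le> lip_seminorm P f"
  show "ext0 P f x \<le> ext0 P g x"
    unfolding ext0_def
  proof (rule cSUP_mono[OF assms(1) ext_bdd[OF assms(3)]])
    fix p assume p: "p \<in> P"
    have "lip_seminorm P g * dist p x \<le> lip_seminorm P f * dist p x"
      using h by (simp add: mult_right_mono)
    then show "\<exists>q\<in>P. f p - lip_seminorm P f * dist p x \<le> g q - lip_seminorm P g * dist q x"
      using h p by (intro bexI[of _ p]) auto
  qed
next
  fix x
  assume h: "lip_seminorm P f \<le> lip_seminorm P (\<lambda>p. max (f p) (g p))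
         \<and> lip_seminorm P g \<le> lip_seminorm P (\<lambda>p. max (f p) (g p))"
  let ?L = "lip_seminorm P (\<lambda>p. max (f p) (g p))"
  show "ext0 P (\<lambda>p. max (f p) (g p)) x \<le> max (ext0 P f x) (ext0 P g x)"
    unfolding ext0_def
  proof (rule cSUP_least[OF assms(1)])
    fix p assume p: "p \<in> P"
    have a: "f p - lip_seminorm P f * dist p x \<le> (SUP p\<in>P. f p - lip_seminorm P f * dist p x)"
      by (rule cSUP_upper[OF p ext_bdd[OF assms(2)]])
    have b: "g p - lip_seminorm P g * dist p x \<le> (SUP p\<in>P. g p - lip_seminorm P g * dist p x)"
      by (rule cSUP_upper[OF p ext_bdd[OF assms(3)]])
    have c: "lip_seminorm P f * dist p x \<le> ?L * dist p x"
      "lip_seminorm P g * dist p x \<le> ?L * dist p x"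
      using h by (simp_all add: mult_right_mono)
    show "max (f p) (g p) - ?L * dist p x \<le> max (SUP p\<in>P. f p - lip_seminorm P f * dist p x) (SUP p\<in>P. g p - lip_seminorm P g * dist p x)"
      using a b c by linarith
  qed
qed

end
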